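(* Let $\Omega\subseteq\mathbb R^d$ be nonempty open, $A\in\mathcal A(\Omega)$, $b,c\in L^\infty(\Omega;\mathbb C^d)$, $V\in L^1_{\rm loc}(\Omega)$ nonnegative, $\mathbf A=(A,b,c,V)$, and let $r>0$, $\zeta\in\mathbb C\setminus\{0\}$, $X\in\mathbb C^d$. Suppose that for a.e. $x\in\Omega$, $\Gamma_r^{\mathbf A}(x,\xi)\ge0$ for all $\xi\in\mathbb C^d$. Then $\mathbf H^{\mathbf A(x)}_{F_r}[\zeta;X]\ge0$ for a.e. $x\in\Omega$. Moreover, if $\mathbf A\in\mathcal S_r(\Omega)$, then for a.e. $x\in\Omega$, $$\mathbf H^{\mathbf A(x)}_{F_r}[\zeta;X]\ge r\,\mu_r(\mathbf A)\,|\zeta|^{r-2}\big(|X|^2+V(x)|\zeta|^2\big).$$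
   Context: $\langle \xi,\sigma\rangle=\sum_j\xi_j\overline{\sigma_j}$. $\mathcal{A}(\Omega)$: measurable $A:\Omega\to\mathbb{C}^{d\times d}$ with $\lambda,\Lambda>0$ such that $\Re\langle A(x)\xi,\xi\rangle\ge\lambda|\xi|^2$, $|\langle A(x)\xi,\sigma\rangle|\le\Lambda|\xi||\sigma|$ a.e. For $r>0$: $\mathcal{J}_r\xi=\frac r2(\xi+(1-\frac2r)\overline\xi)$, $\Delta_r(A)=\operatorname{ess\,inf}_{x}\min_{|\xi|=1}\Re\langle A(x)\xi,\xi+|1-2/r|\overline\xi\rangle$, $\mathcal A_r(\Omega)=\{A:\Delta_r(A)>0\}$, $\Gamma_r^{\mathbf A}(x,\xi)=\Re\langle A(x)\xi,\mathcal J_r\xi\rangle+\Re\langle b(x)+\mathcal J_rc(x),\xi\rangle+V(x)$, and $\mathcal S_r(\Omega)$ is the set of such quadruples with $A\in\mathcal A_r(\Omega)$, $|b-c|\le M\sqrt V$ a.e. for some $M$, and $\Gamma_r^{\mathbf A}(x,\xi)\ge\mu(|\xi|^2+V(x))$ a.e., all $\xi$, for some $\mu>0$; $\mu_r(\mathbf A)$ is the largest such $\mu$. Real forms: $\mathcal V_d:\mathbb C^d\to\mathbb R^{2d}$, $\mathcal V_d(\xi_1+i\xi_2)=(\xi_1,\xi_2)$; for $A\in\mathbb C^{d\times d}$, $\mathcal M(A)=\begin{bmatrix}\Re A&-\Im A\\ \Im A&\Re A\end{bmatrix}$. For $\phi:\mathbb C\to\mathbb R$ of class $C^2$ near $\zeta$,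 let $D^2\phi(\zeta)$ and $\nabla\phi(\zeta)$ be the Hessian and gradient of $\phi\circ\mathcal V_1^{-1}$ at $\mathcal V_1(\zeta)$. For $A\in\mathbb C^{d\times d}$, $b,c\in\mathbb C^d$, $V\in\mathbb R$, $\mathbf A=(A,b,c,V)$, define $\mathbf H^{\mathbf A}_\phi[\zeta;X]=\langle (D^2\phi(\zeta)\otimes I_{\mathbb R^d})\mathcal V_d(X),\mathcal M(A)\mathcal V_d(X)\rangle_{\mathbb R^{2d}}+\langle (D^2\phi(\zeta)\otimes I_{\mathbb R^d})\mathcal V_d(X),\mathcal V_d(\zeta c)\rangle_{\mathbb R^{2d}}+\langle\nabla\phi(\zeta),\mathcal V_1(\langle X,b\rangle)\rangle_{\mathbb R^2}+\langle\nabla\phi(\zeta),\mathcal V_1(V\zeta)\rangle_{\mathbb R^2}$, where $\otimes$ is the Kronecker product. $F_r(\zeta)=|\zeta|^r$. $\mathbf A(x)=(A(x),b(x),c(x),V(x))$. *)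

theory Defs
  imports "HOL-Analysis.Analysis"
begin

definition cinner :: "complex^'n \<Rightarrow> complex^'n \<Rightarrow> complex" where
  "cinner \<xi> \<sigma> = (\<Sum>j\<in>UNIV. \<xi>$j * cnj (\<sigma>$j))"

definition cnjv :: "complex^'n \<Rightarrow> complex^'n" where
  "cnjv \<xi> = (\<chi> j. cnj (\<xi>$j))"

definition Jr :: "real \<Rightarrow> complex^'n \<Rightarrow> complex^'n" where
  "Jr r \<xi> = (\<chi> j. complex_of_real (r/2) * (\<xi>$j + complex_of_real (1 - 2/r) * cnj (\<xi>$j)))"

definition ellipticA :: "(real^'n) set \<Rightarrow> (real^'n \<Rightarrow> complex^'n^'n) \<Rightarrow> bool" where
  "ellipticA \<Omega> A \<longleftrightarrow> A \<in> borel_measurable (lebesgue_on \<Omega>) \<and>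
     (\<exists>lam>0. \<exists>Lam>0. AE x in lebesgue_on \<Omega>.
        (\<forall>\<xi>. Re (cinner (A x *v \<xi>) \<xi>) \<ge> lam * (norm \<xi>)\<^sup>2) \<and>
        (\<forall>\<xi> \<sigma>. cmod (cinner (A x *v \<xi>) \<sigma>) \<le> Lam * norm \<xi> * norm \<sigma>))"

definition Delta_r :: "(real^'n) set \<Rightarrow> real \<Rightarrow> (real^'n \<Rightarrow> complex^'n^'n) \<Rightarrow> real" where
  "Delta_r \<Omega> r A = Sup {\<delta>. AE x in lebesgue_on \<Omega>. \<forall>\<xi>. norm \<xi> = 1 \<longrightarrow>
       \<delta> \<le> Re (cinner (A x *v \<xi>) (\<xi> + complex_of_real \<bar>1 - 2/r\<bar> *s cnjv \<xi>))}"

definition Gamma_r :: "real \<Rightarrow> complex^'n^'n \<Rightarrow> complex^'n \<Rightarrow> complex^'n \<Rightarrow> real \<Rightarrow> complex^'n \<Rightarrow> real" where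
  "Gamma_r r A b c V \<xi> = Re (cinner (A *v \<xi>) (Jr r \<xi>)) + Re (cinner (b + Jr r c) \<xi>) + V"

definition Sr :: "(real^'n) set \<Rightarrow> real \<Rightarrow> (real^'n \<Rightarrow> complex^'n^'n) \<Rightarrow> (real^'n \<Rightarrow> complex^'n)
      \<Rightarrow> (real^'n \<Rightarrow> complex^'n) \<Rightarrow> (real^'n \<Rightarrow> real) \<Rightarrow> bool" where
  "Sr \<Omega> r A b c V \<longleftrightarrow> ellipticA \<Omega> A \<and> Delta_r \<Omega> r A > 0 \<and>
     (\<exists>M. AE x in lebesgue_on \<Omega>. norm (b x - c x) \<le> M * sqrt (V x)) \<and>
     (\<exists>\<mu>>0. AE x in lebesgue_on \<Omega>. \<forall>\<xi>.
        Gamma_r r (A x) (b x) (c x) (V x) \<xi> \<ge> \<mu> * ((norm \<xi>)\<^sup>2 + V x))"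

definition mu_r :: "(real^'n) set \<Rightarrow> real \<Rightarrow> (real^'n \<Rightarrow> complex^'n^'n) \<Rightarrow> (real^'n \<Rightarrow> complex^'n)
      \<Rightarrow> (real^'n \<Rightarrow> complex^'n) \<Rightarrow> (real^'n \<Rightarrow> real) \<Rightarrow> real" where
  "mu_r \<Omega> r A b c V = Sup {\<mu>. \<mu> > 0 \<and> (AE x in lebesgue_on \<Omega>. \<forall>\<xi>.
        Gamma_r r (A x) (b x) (c x) (V x) \<xi> \<ge> \<mu> * ((norm \<xi>)\<^sup>2 + V x))}"

text \<open>Real forms. R^{2d} is indexed by 2 \<times> 'n, (1,k) real parts, (2,k) imaginary parts.\<close>
definition Vd :: "complex^'n \<Rightarrow> real^(2 \<times> 'n)" where
  "Vd X = (\<chi> p. if fst p = 1 then Re (X $ snd p) else Im (X $ snd p))"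

definition V1 :: "complex \<Rightarrow> real^2" where
  "V1 z = vector [Re z, Im z]"

definition V1inv :: "real^2 \<Rightarrow> complex" where
  "V1inv p = Complex (p$1) (p$2)"

definition MA :: "complex^'n^'n \<Rightarrow> real^(2 \<times> 'n)^(2 \<times> 'n)" where
  "MA A = (\<chi> p q. if fst p = fst q then Re (A $ snd p $ snd q)
                   else if fst p = 1 then - Im (A $ snd p $ snd q)
                   else Im (A $ snd p $ snd q))"

definition kron :: "real^'a^'a \<Rightarrow> real^'b^'b \<Rightarrow> real^('a \<times> 'b)^('a \<times> 'b)" where
  "kron P Q = (\<chi> p q. P $ fst p $ fst q * Q $ snd p $ snd q)"

definition partial :: "(real^2 \<Rightarrow> real) \<Rightarrow> 2 \<Rightarrow> real^2 \<Rightarrow> real" where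
  "partial f i p = deriv (\<lambda>t. f (p + t *\<^sub>R axis i 1)) 0"

definition D2 :: "(complex \<Rightarrow> real) \<Rightarrow> complex \<Rightarrow> real^2^2" where
  "D2 \<phi> \<zeta> = (\<chi> i j. partial (\<lambda>q. partial (\<phi> \<circ> V1inv) j q) i (V1 \<zeta>))"

definition grad :: "(complex \<Rightarrow> real) \<Rightarrow> complex \<Rightarrow> real^2" where
  "grad \<phi> \<zeta> = (\<chi> i. partial (\<phi> \<circ> V1inv) i (V1 \<zeta>))"

definition Hphi :: "(complex \<Rightarrow> real) \<Rightarrow> complex^'n^'n \<Rightarrow> complex^'n \<Rightarrow> complex^'n \<Rightarrow> real
      \<Rightarrow> complex \<Rightarrow> complex^'n \<Rightarrow> real" where
  "Hphi \<phi> A b c V \<zeta> X =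
     (kron (D2 \<phi> \<zeta>) (mat 1) *v Vd X) \<bullet> (MA A *v Vd X)
   + (kron (D2 \<phi> \<zeta>) (mat 1) *v Vd X) \<bullet> Vd (\<zeta> *s c)
   + grad \<phi> \<zeta> \<bullet> V1 (cinner X b)
   + grad \<phi> \<zeta> \<bullet> V1 (complex_of_real V * \<zeta>)"

definition F_r :: "real \<Rightarrow> complex \<Rightarrow> real" where
  "F_r r \<zeta> = cmod \<zeta> powr r"

definition Linf_on :: "(real^'n) set \<Rightarrow> (real^'n \<Rightarrow> 'b::euclidean_space) \<Rightarrow> bool" where
  "Linf_on \<Omega> f \<longleftrightarrow> f \<in> borel_measurable (lebesgue_on \<Omega>) \<and>
     (\<exists>C. AE x in lebesgue_on \<Omega>. norm (f x) \<le> C)"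

definition L1loc_on :: "(real^'n) set \<Rightarrow> (real^'n \<Rightarrow> real) \<Rightarrow> bool" where
  "L1loc_on \<Omega> f \<longleftrightarrow> f \<in> borel_measurable (lebesgue_on \<Omega>) \<and>
     (\<forall>K. compact K \<and> K \<subseteq> \<Omega> \<longrightarrow> integrable (lebesgue_on K) f)"

end

theory Submission
  imports Defs
begin



lemma deriv_sq_powr:
  fixes q e :: "real^'m" and a :: real
  assumes "q \<noteq> 0"
  shows "((\<lambda>t. ((q + t *\<^sub>R e) \<bullet> (q + t *\<^sub>R e)) powr a) has_real_derivative
           a * (q \<bullet> q) powr (a - 1) * (2 * (q \<bullet> e))) (at 0)"
proof -
  have eq: "(\<lambda>t. (q + t *\<^sub>R e) \<bullet> (q + t *\<^sub>R e)) = (\<lambda>t. q \<bullet> q + 2 * t * (q \<bullet> e) + t^2 * (e \<bullet> e))"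
    by (auto simp: inner_add inner_commute algebra_simps power2_eq_square)
  have d: "((\<lambda>t. (q + t *\<^sub>R e) \<bullet> (q + t *\<^sub>R e)) has_real_derivative 2 * (q \<bullet> e)) (at 0)"
    unfolding eq by (auto intro!: derivative_eq_intros)
  have pos: "(q + 0 *\<^sub>R e) \<bullet> (q + 0 *\<^sub>R e) > 0" using assms by simp
  from DERIV_fun_powr[OF d pos, of a] show ?thesis by simp
qed

lemma ev_ne:
  fixes p e :: "real^'m"
  assumes "p \<noteq> 0"
  shows "eventually (\<lambda>t. p + t *\<^sub>R e \<noteq> 0) (nhds (0::real))"
proof -
  have "((\<lambda>t. p + t *\<^sub>R e) \<longlongrightarrow> p + 0 *\<^sub>R e) (nhds (0::real))"
    by (intro tendsto_intros filterlim_ident)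
  then show ?thesis using assms tendsto_imp_eventually_ne by fastforce
qed

definition gN :: "real \<Rightarrow> real^2 \<Rightarrow> real" where
  "gN r q = (q \<bullet> q) powr (r/2)"

lemma partial_gN:
  assumes "q \<noteq> 0"
  shows "partial (gN r) j q = r * (q \<bullet> q) powr (r/2 - 1) * q$j"
proof -
  have "partial (gN r) j q = r/2 * (q \<bullet> q) powr (r/2 - 1) * (2 * (q \<bullet> axis j 1))"
    unfolding partial_def gN_def by (rule DERIV_imp_deriv[OF deriv_sq_powr[OF assms]])
  then show ?thesis by (simp add: inner_axis)
qed

lemma partial2_gN:
  assumes "p \<noteq> 0"
  shows "partial (\<lambda>q. partial (gN r) j q) i p =
     r * ((r/2 - 1) * (p \<bullet> p) powr (r/2 - 2) * (2 * p$i) * p$j + (p \<bullet> p) powr (r/2 - 1) * (if j = i then 1 else 0))"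
proof -
  have "partial (\<lambda>q. partial (gN r) j q) i p =
     deriv (\<lambda>t. r * (((p + t *\<^sub>R axis i 1) \<bullet> (p + t *\<^sub>R axis i 1)) powr (r/2 - 1) * (p + t *\<^sub>R axis i 1)$j)) 0"
    unfolding partial_def[of "\<lambda>q. partial (gN r) j q"]
    apply (rule deriv_cong_ev[OF _ refl])
    using ev_ne[OF assms, of "axis i 1"] by eventually_elim (simp add: partial_gN)
  also have "\<dots> = r * ((r/2 - 1) * (p \<bullet> p) powr (r/2 - 2) * (2 * p$i) * p$j + (p \<bullet> p) powr (r/2 - 1) * (if j = i then 1 else 0))"
  proof -
    have h2: "((\<lambda>t. (p + t *\<^sub>R axis i 1)$j) has_real_derivative (if j = i then 1 else 0)) (at 0)"
      by (auto simp: axis_def intro!: derivative_eq_intros)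
    note D = DERIV_cmult[OF DERIV_mult[OF deriv_sq_powr[OF assms, of "axis i 1" "r/2-1"] h2], of r]
    show ?thesis using DERIV_imp_deriv[OF D] by (simp add: inner_axis algebra_simps)
  qed
  finally show ?thesis .
qed



lemma sum_prod2: "(\<Sum>p\<in>(UNIV::(2\<times>'n::finite) set). f p) = (\<Sum>k\<in>UNIV. f (1,k) + f (2,k))"
proof -
  have "(\<Sum>p\<in>(UNIV::(2\<times>'n::finite) set). f p) = (\<Sum>a\<in>UNIV. \<Sum>k\<in>UNIV. f (a,k))"
    unfolding UNIV_Times_UNIV[symmetric] sum.cartesian_product by (simp add: case_prod_beta)
  also have "\<dots> = (\<Sum>k\<in>UNIV. f (1,k) + f (2,k))" by (simp add: sum_2 sum.distrib)
  finally show ?thesis .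
qed

lemma Vd_inner: "Vd u \<bullet> Vd w = Re (cinner u w)"
  by (simp add: inner_vec_def sum_prod2 Vd_def cinner_def Re_sum)

lemma MA_Vd: "MA A *v Vd X = Vd (A *v X)"
proof -
  have "(MA A *v Vd X) $ (a,k) = Vd (A *v X) $ (a,k)" for a k
  proof (cases "a = 1")
    case True
    then show ?thesis
      by (simp add: matrix_vector_mult_def MA_def Vd_def sum_prod2 Re_sum sum_subtractf)
  next
    case False
    then have "a = 2" using exhaust_2[of a] by auto
    then show ?thesis
      by (simp add: matrix_vector_mult_def MA_def Vd_def sum_prod2 Im_sum sum.distrib algebra_simps)
  qed
  then show ?thesis by (simp add: vec_eq_iff split_paired_All)
qed

lemma delta_sum: fixes g :: "'n::finite \<Rightarrow> real" shows "(\<Sum>l\<in>UNIV. c * (if k = l then 1 else 0) * g l) = c * (g k :: real)"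
proof -
  have "(\<Sum>l\<in>UNIV. c * (if k = l then 1 else 0) * g l) = (\<Sum>l\<in>UNIV. if k = l then c * g k else 0)"
    by (rule sum.cong) auto
  then show ?thesis by (simp add: sum.delta sum.delta')
qed

lemma kron_Vd: "(kron P (mat 1) *v Vd X) $ (a,k) = P$a$1 * Re (X$k) + P$a$2 * Im (X$k)"
  by (simp add: matrix_vector_mult_def kron_def mat_def Vd_def sum_prod2 sum.distrib delta_sum)

lemma cinner_scale_left: "cinner (a *s u) w = a * cinner u w"
  by (simp add: cinner_def sum_distrib_left mult.assoc)

lemma cinner_scale_right: "cinner u (a *s w) = cnj a * cinner u w"
  by (simp add: cinner_def sum_distrib_left algebra_simps)

lemma cinner_add_left: "cinner (u + v) w = cinner u w + cinner v w"
  by (simp add: cinner_def sum.distrib algebra_simps)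

lemma cinner_commute: "cinner u w = cnj (cinner w u)"
  by (simp add: cinner_def cnj_sum mult.commute)

lemma mv_scale: fixes A :: "complex^'n^'m" shows "A *v (a *s x) = a *s (A *v x)"
proof -
  have "(A *v (a *s x)) $ i = (a *s (A *v x)) $ i" for i
  proof -
    have "(A *v (a *s x)) $ i = (\<Sum>j\<in>UNIV. A $ i $ j * (a * x $ j))"
      by (simp add: matrix_vector_mult_def)
    also have "\<dots> = (\<Sum>j\<in>UNIV. a * (A $ i $ j * x $ j))"
      by (rule sum.cong) (simp_all add: mult.left_commute)
    also have "\<dots> = (a *s (A *v x)) $ i"
      by (simp add: matrix_vector_mult_def sum_distrib_left)
    finally show ?thesis .
  qed
  then show ?thesis by (simp add: vec_eq_iff)
qed

lemma Jr_sym: "Re (cinner (Jr r u) w) = Re (cinner (Jr r w) u)"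
  by (cases "r = 0") (simp_all add: cinner_def Jr_def Re_sum algebra_simps)

lemma cinner_zero_right: "cinner u 0 = 0"
  by (simp add: cinner_def)

lemma cmod_sq': "cmod z * cmod z = Re z * Re z + Im z * Im z"
  by (metis cmod_power2 power2_eq_square)

lemma cinner_self: "Re (cinner u u) = (norm u)^2"
proof -
  have "(norm u)^2 = (\<Sum>k\<in>UNIV. (cmod (u$k))^2)"
    by (simp add: norm_vec_def L2_set_def sum_nonneg)
  then show ?thesis by (simp add: cinner_def cmod_sq' power2_eq_square)
qed


lemma V1_comp: "V1 z $ 1 = Re z" "V1 z $ 2 = Im z"
  by (simp_all add: V1_def)

lemma V1_inner: "V1 z \<bullet> V1 z = (cmod z)^2"
  by (simp add: inner_vec_def sum_2 V1_comp cmod_sq' power2_eq_square)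

lemma V1_nz: "z \<noteq> 0 \<Longrightarrow> V1 z \<noteq> 0"
  using V1_inner[of z] by auto

lemma Fr_comp: "F_r r \<circ> V1inv = gN r"
proof
  fix q :: "real^2"
  have "q \<bullet> q = (q$1)^2 + (q$2)^2" by (simp add: inner_vec_def sum_2 power2_eq_square)
  moreover have "cmod (V1inv q) = sqrt ((q$1)^2 + (q$2)^2)" by (simp add: V1inv_def cmod_def)
  moreover have "sqrt x powr r = x powr (r/2)" if "x \<ge> 0" for x :: real
    using that by (simp add: powr_half_sqrt[symmetric] powr_powr)
  ultimately show "(F_r r \<circ> V1inv) q = gN r q" by (simp add: F_r_def gN_def)
qed

lemma grad_Fr:
  assumes "z \<noteq> 0"
  shows "grad (F_r r) z $ i = r * ((cmod z)^2) powr (r/2 - 1) * V1 z $ i"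
  by (simp add: grad_def Fr_comp partial_gN[OF V1_nz[OF assms]] V1_inner)

lemma D2_Fr:
  assumes "z \<noteq> 0"
  shows "D2 (F_r r) z $ i $ j = r * ((r/2 - 1) * ((cmod z)^2) powr (r/2 - 2) * (2 * V1 z $ i) * V1 z $ j
      + ((cmod z)^2) powr (r/2 - 1) * (if j = i then 1 else 0))"
  by (simp add: D2_def Fr_comp partial2_gN[OF V1_nz[OF assms]] V1_inner)

lemma powr_m2: "(N::real) > 0 \<Longrightarrow> N powr (r/2 - 2) = N powr (r/2 - 1) / N"
proof -
  assume "N > 0"
  have "N powr (r/2 - 2) = N powr ((r/2 - 1) - 1)" by simp
  also have "\<dots> = N powr (r/2 - 1) / N" using \<open>N > 0\<close> by (simp add: powr_diff power2_eq_square)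
  finally show ?thesis .
qed

lemma kron_D2:
  fixes r :: real and z :: complex
  assumes "z \<noteq> 0"
  defines "N \<equiv> (cmod z)^2"
  defines "P \<equiv> N powr (r/2 - 1)"
  shows "kron (D2 (F_r r) z) (mat 1) *v Vd X =
    Vd (\<chi> k. of_real (r * P) * X$k + of_real (r * (r - 2) * P / N * Re (X$k * cnj z)) * z)"
proof -
  have N: "N > 0" using assms by simp
  have m2: "N powr (r/2 - 2) = P / N" using powr_m2[OF N] P_def by simp
  have "(kron (D2 (F_r r) z) (mat 1) *v Vd X) $ (a,k) =
    Vd (\<chi> k. of_real (r * P) * X$k + of_real (r * (r - 2) * P / N * Re (X$k * cnj z)) * z) $ (a,k)" for a k
  proof (cases "a = 1")
    case True
    then show ?thesis
      using N unfolding kron_Vd by (simp add: D2_Fr[OF assms(1)] Vd_def V1_comp m2 flip: N_def P_def) (simp add: field_simps)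
  next
    case False
    then have "a = 2" using exhaust_2[of a] by auto
    then show ?thesis
      using N unfolding kron_Vd by (simp add: D2_Fr[OF assms(1)] Vd_def V1_comp m2 flip: N_def P_def) (simp add: field_simps)
  qed
  then show ?thesis by (simp add: vec_eq_iff split_paired_All)
qed

lemma Yc:
  fixes z w :: complex and a r :: real
  assumes "z \<noteq> 0" "r \<noteq> 0"
  shows "of_real a * w + of_real (a * (r - 2) / (cmod z)^2 * Re (w * cnj z)) * z
       = of_real a * z * (of_real (r/2) * (w/z + of_real (1 - 2/r) * cnj (w/z)))"
proof -
  define u where "u = w / z"
  have w: "w = z * u" using assms u_def by simp
  have zz: "z * cnj z = of_real ((cmod z)^2)" by (rule complex_norm_square[symmetric])
  have N: "(cmod z)^2 > 0" using assms by simp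
  have "Re (w * cnj z) = (cmod z)^2 * Re u"
  proof -
    have "w * cnj z = of_real ((cmod z)^2) * u" unfolding w zz[symmetric] by (simp add: algebra_simps)
    then show ?thesis by simp
  qed
  then have e: "a * (r - 2) / (cmod z)^2 * Re (w * cnj z) = a * ((r - 2) * Re u)"
    using N by simp
  have l: "of_real a * w + of_real (a * (r - 2) / (cmod z)^2 * Re (w * cnj z)) * z
      = of_real a * z * (u + of_real ((r - 2) * Re u))"
    unfolding e unfolding w by (simp add: algebra_simps)
  have "of_real (r/2) * (u + of_real (1 - 2/r) * cnj u) = u + of_real ((r - 2) * Re u)"
    using assms(2) by (simp add: complex_eq_iff field_simps)
  then show ?thesis using l u_def by simp
qed

lemma grad_V1:
  assumes "z \<noteq> 0"
  shows "grad (F_r r) z \<bullet> V1 w = r * ((cmod z)^2) powr (r/2 - 1) * Re (w * cnj z)"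
  by (simp add: inner_vec_def sum_2 grad_Fr[OF assms] V1_comp algebra_simps)

lemma H_id:
  fixes r :: real and z :: complex and X :: "complex^'n"
  assumes "z \<noteq> 0" "r > 0"
  defines "N \<equiv> (cmod z)^2"
  defines "P \<equiv> N powr (r/2 - 1)"
  defines "\<xi> \<equiv> (\<chi> k. X$k / z)"
  shows "Hphi (F_r r) A b c V z X = r * P * N * Gamma_r r A b c V \<xi>"
proof -
  have X: "X = z *s \<xi>" using assms(1) by (simp add: vec_eq_iff \<xi>_def)
  have zz: "z * cnj z = of_real N" unfolding N_def by (rule complex_norm_square[symmetric])
  have Y: "kron (D2 (F_r r) z) (mat 1) *v Vd X = Vd ((of_real (r * P) * z) *s Jr r \<xi>)"
  proof -
    have "(\<chi> k. of_real (r * P) * X$k + of_real (r * (r - 2) * P / N * Re (X$k * cnj z)) * z)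
        = (of_real (r * P) * z) *s Jr r \<xi>"
    proof -
      have "of_real (r * P) * X$k + of_real (r * (r - 2) * P / N * Re (X$k * cnj z)) * z
        = (of_real (r * P) * z) * (Jr r \<xi>)$k" for k
      proof -
        have Jk: "(Jr r \<xi>)$k = of_real (r/2) * (X$k/z + of_real (1-2/r) * cnj (X$k/z))"
          by (simp add: Jr_def \<xi>_def)
        have e1: "r * (r - 2) * P / N = (r * P) * (r - 2) / (cmod z)^2" by (simp add: N_def)
        show ?thesis unfolding Jk e1
          by (rule Yc[where w="X$k" and a="r*P" and r=r, OF assms(1)]) (use assms(2) in simp)
      qed
      then show ?thesis by (simp add: vec_eq_iff)
    qed
    then show ?thesis using kron_D2[OF assms(1), of r X] by (simp add: N_def P_def)
  qed
  have t1: "(kron (D2 (F_r r) z) (mat 1) *v Vd X) \<bullet> (MA A *v Vd X) = r * P * N * Re (cinner (A *v \<xi>) (Jr r \<xi>))"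
  proof -
    have "(kron (D2 (F_r r) z) (mat 1) *v Vd X) \<bullet> (MA A *v Vd X)
        = Re (cinner ((of_real (r * P) * z) *s Jr r \<xi>) (z *s (A *v \<xi>)))"
      unfolding Y MA_Vd Vd_inner by (simp only: X mv_scale)
    also have "\<dots> = Re (of_real (r * P) * (z * cnj z) * cinner (Jr r \<xi>) (A *v \<xi>))"
      by (simp add: cinner_scale_left cinner_scale_right algebra_simps)
    also have "\<dots> = r * P * N * Re (cinner (A *v \<xi>) (Jr r \<xi>))"
      unfolding zz by (subst cinner_commute) simp
    finally show ?thesis .
  qed
  have t2: "(kron (D2 (F_r r) z) (mat 1) *v Vd X) \<bullet> Vd (z *s c) = r * P * N * Re (cinner (Jr r c) \<xi>)"
  proof -
    have "(kron (D2 (F_r r) z) (mat 1) *v Vd X) \<bullet> Vd (z *s c)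
        = Re (cinner ((of_real (r * P) * z) *s Jr r \<xi>) (z *s c))"
      unfolding Y Vd_inner ..
    also have "\<dots> = Re (of_real (r * P) * (z * cnj z) * cinner (Jr r \<xi>) c)"
      by (simp add: cinner_scale_left cinner_scale_right algebra_simps)
    also have "\<dots> = r * P * N * Re (cinner (Jr r c) \<xi>)"
      unfolding zz using Jr_sym[of r \<xi> c] by simp
    finally show ?thesis .
  qed
  have t3: "grad (F_r r) z \<bullet> V1 (cinner X b) = r * P * N * Re (cinner b \<xi>)"
  proof -
    have "grad (F_r r) z \<bullet> V1 (cinner X b) = r * P * Re (z * cnj z * cinner \<xi> b)"
      unfolding grad_V1[OF assms(1)] X cinner_scale_left by (simp add: P_def N_def algebra_simps)
    also have "\<dots> = r * P * N * Re (cinner b \<xi>)"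
      unfolding zz by (subst cinner_commute) simp
    finally show ?thesis .
  qed
  have t4: "grad (F_r r) z \<bullet> V1 (of_real V * z) = r * P * N * V"
  proof -
    have "grad (F_r r) z \<bullet> V1 (of_real V * z) = r * P * Re (of_real V * (z * cnj z))"
      unfolding grad_V1[OF assms(1)] by (simp add: P_def N_def algebra_simps)
    also have "\<dots> = r * P * N * V" unfolding zz by simp
    finally show ?thesis .
  qed
  show ?thesis
    unfolding Hphi_def t1 t2 t3 t4 Gamma_r_def cinner_add_left
    by (simp add: algebra_simps)
qed



lemma ball_pos: "(e::real) > 0 \<Longrightarrow> emeasure lebesgue (ball (c::real^'n) e) > 0"
proof -
  assume "e > 0"
  then obtain a b where box: "c \<in> box a b" "box a b \<subseteq> ball c e"
    by (metis rational_boxes order_trans)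
  then have "0 < emeasure lebesgue (box a b)"
    by (auto simp: emeasure_lborel_box_eq mem_box algebra_simps intro!: prod_pos)
  also have "\<dots> \<le> emeasure lebesgue (ball c e)"
    using box by (intro emeasure_mono) auto
  finally show ?thesis .
qed

lemma not_AE_False:
  assumes "open (\<Omega>::(real^'n) set)" "\<Omega> \<noteq> {}"
  shows "\<not> (AE x in lebesgue_on \<Omega>. False)"
proof
  assume a: "AE x in lebesgue_on \<Omega>. False"
  have sp: "space (lebesgue_on \<Omega>) = \<Omega>" by (simp add: space_restrict_space)
  have "emeasure (lebesgue_on \<Omega>) (space (lebesgue_on \<Omega>)) = 0"
    using AE_iff_measurable[OF sets.top, of "lebesgue_on \<Omega>" "\<lambda>x. False"] a by simp
  then have "emeasure (lebesgue_on \<Omega>) \<Omega> = 0" unfolding sp .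
  then have z: "emeasure lebesgue \<Omega> = 0"
    using assms(1) by (simp add: emeasure_restrict_space)
  obtain c where "c \<in> \<Omega>" using assms(2) by auto
  then obtain e where e: "e > 0" "ball c e \<subseteq> \<Omega>" using assms(1) openE by blast
  have "emeasure lebesgue (ball c e) \<le> emeasure lebesgue \<Omega>"
    using e assms(1) by (intro emeasure_mono) auto
  then show False using z ball_pos[OF e(1), of c] by simp
qed



lemma AE_ex:
  assumes "open (\<Omega>::(real^'n) set)" "\<Omega> \<noteq> {}" "AE x in lebesgue_on \<Omega>. P x"
  shows "\<exists>x. P x"
proof (rule ccontr)
  assume np: "\<nexists>x. P x"
  have "AE x in lebesgue_on \<Omega>. False" using assms(3)
    by (rule eventually_mono) (use np in blast)
  then show False using not_AE_False[OF assms(1,2)] by simp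
qed

lemma Gamma_zero: "Gamma_r r A b c V 0 = V"
  by (simp add: Gamma_r_def cinner_def)

lemma norm_scale_sq: "(norm (z *s u))^2 = (cmod z)^2 * (norm u)^2"
proof -
  have "(norm (z *s u))^2 = Re (z * cnj z * cinner u u)"
    by (simp add: cinner_self[symmetric] cinner_scale_left cinner_scale_right algebra_simps)
  also have "\<dots> = (cmod z)^2 * (norm u)^2"
    by (simp add: complex_norm_square[symmetric] cinner_self)
  finally show ?thesis .
qed

lemma powr_cmod: "z \<noteq> 0 \<Longrightarrow> cmod z powr (r - 2) = ((cmod z)^2) powr (r/2 - 1)"
proof -
  assume "z \<noteq> 0"
  then have "(cmod z)^2 = cmod z powr 2" by (simp add: powr_numeral)
  then have "((cmod z)^2) powr (r/2 - 1) = (cmod z powr 2) powr (r/2 - 1)" by simp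
  also have "\<dots> = cmod z powr (2 * (r/2 - 1))" by (rule powr_powr)
  also have "2 * (r/2 - 1) = r - 2" by simp
  finally show ?thesis by simp
qed

theorem proposition4p2:
  fixes \<Omega> :: "(real^'n) set"
    and A :: "real^'n \<Rightarrow> complex^'n^'n"
    and b c :: "real^'n \<Rightarrow> complex^'n"
    and V :: "real^'n \<Rightarrow> real"
    and r :: real and \<zeta> :: complex and X :: "complex^'n"
  assumes "open \<Omega>" and "\<Omega> \<noteq> {}"
    and "ellipticA \<Omega> A"
    and "Linf_on \<Omega> b" and "Linf_on \<Omega> c"
    and "L1loc_on \<Omega> V" and "AE x in lebesgue_on \<Omega>. V x \<ge> 0"
    and "r > 0" and "\<zeta> \<noteq> 0"
    and "AE x in lebesgue_on \<Omega>. \<forall>\<xi>. Gamma_r r (A x) (b x) (c x) (V x) \<xi> \<ge> 0"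
  shows "(AE x in lebesgue_on \<Omega>. Hphi (F_r r) (A x) (b x) (c x) (V x) \<zeta> X \<ge> 0)
    \<and> (Sr \<Omega> r A b c V \<longrightarrow>
        (AE x in lebesgue_on \<Omega>. Hphi (F_r r) (A x) (b x) (c x) (V x) \<zeta> X
           \<ge> r * mu_r \<Omega> r A b c V * cmod \<zeta> powr (r - 2) * ((norm X)\<^sup>2 + V x * (cmod \<zeta>)\<^sup>2)))"
proof -
  define N where "N = (cmod \<zeta>)^2"
  define P where "P = N powr (r/2 - 1)"
  define \<xi> where "\<xi> = (\<chi> k. X$k / \<zeta>)"
  have N: "N > 0" using assms(9) by (simp add: N_def)
  have Ppos: "P > 0" using N by (simp add: P_def)
  have rPN: "r * P * N > 0" using N Ppos assms(8) by simp
  have H: "Hphi (F_r r) (A x) (b x) (c x) (V x) \<zeta> X = r * P * N * Gamma_r r (A x) (b x) (c x) (V x) \<xi>" for x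
    unfolding N_def P_def \<xi>_def by (rule H_id[OF assms(9,8)])
  have X: "X = \<zeta> *s \<xi>" using assms(9) by (simp add: vec_eq_iff \<xi>_def)
  have normX: "(norm X)^2 = N * (norm \<xi>)^2" unfolding X N_def by (rule norm_scale_sq)
  have Pc: "cmod \<zeta> powr (r - 2) = P" unfolding P_def N_def by (rule powr_cmod[OF assms(9)])
  have part1: "AE x in lebesgue_on \<Omega>. Hphi (F_r r) (A x) (b x) (c x) (V x) \<zeta> X \<ge> 0"
    using assms(10) by eventually_elim (use rPN in \<open>simp add: H\<close>)
  have part2: "AE x in lebesgue_on \<Omega>. Hphi (F_r r) (A x) (b x) (c x) (V x) \<zeta> X
           \<ge> r * mu_r \<Omega> r A b c V * cmod \<zeta> powr (r - 2) * ((norm X)\<^sup>2 + V x * (cmod \<zeta>)\<^sup>2)"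
    if SR: "Sr \<Omega> r A b c V"
  proof -
    define G where "G x \<eta> = Gamma_r r (A x) (b x) (c x) (V x) \<eta>" for x \<eta>
    define S where "S = {\<mu>. \<mu> > 0 \<and> (AE x in lebesgue_on \<Omega>. \<forall>\<eta>. G x \<eta> \<ge> \<mu> * ((norm \<eta>)\<^sup>2 + V x))}"
    have m: "mu_r \<Omega> r A b c V = Sup S" unfolding mu_r_def S_def G_def ..
    have "\<exists>\<mu>>0. AE x in lebesgue_on \<Omega>. \<forall>\<xi>.
        Gamma_r r (A x) (b x) (c x) (V x) \<xi> \<ge> \<mu> * ((norm \<xi>)\<^sup>2 + V x)"
      using SR unfolding Sr_def by blast
    then obtain \<mu>0 where "\<mu>0 > 0" "AE x in lebesgue_on \<Omega>. \<forall>\<xi>.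
        Gamma_r r (A x) (b x) (c x) (V x) \<xi> \<ge> \<mu>0 * ((norm \<xi>)\<^sup>2 + V x)" by blast
    then have "\<mu>0 \<in> S" unfolding S_def G_def by blast
    then have Sne: "S \<noteq> {}" by blast
    have down: "\<mu>' \<in> S" if "\<mu> \<in> S" "0 < \<mu>'" "\<mu>' \<le> \<mu>" for \<mu> \<mu>'
    proof -
      have "AE x in lebesgue_on \<Omega>. \<forall>\<eta>. G x \<eta> \<ge> \<mu> * ((norm \<eta>)\<^sup>2 + V x)"
        using that(1) by (simp add: S_def)
      then have "AE x in lebesgue_on \<Omega>. \<forall>\<eta>. G x \<eta> \<ge> \<mu>' * ((norm \<eta>)\<^sup>2 + V x)"
        using assms(7)
      proof eventually_elim
        case (elim x)
        show ?case
        proof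
          fix \<eta> :: "complex^'n"
          have "\<mu>' * ((norm \<eta>)\<^sup>2 + V x) \<le> \<mu> * ((norm \<eta>)\<^sup>2 + V x)"
            using elim(2) that(3) by (intro mult_right_mono) auto
          then show "G x \<eta> \<ge> \<mu>' * ((norm \<eta>)\<^sup>2 + V x)" using elim(1) by (meson order_trans)
        qed
      qed
      then show ?thesis using that(2) by (simp add: S_def)
    qed
    have bdd: "bdd_above S"
    proof (rule ccontr)
      assume nb: "\<not> bdd_above S"
      have "real n + 1 \<in> S" for n :: nat
      proof -
        obtain \<mu> where "\<mu> \<in> S" "\<mu> > real n + 1" using nb by (meson bdd_above.I not_le)
        then show ?thesis using down[of \<mu> "real n + 1"] by simp
      qed
      then have "\<forall>n::nat. AE x in lebesgue_on \<Omega>. \<forall>\<eta>. G x \<eta> \<ge> (real n + 1) * ((norm \<eta>)\<^sup>2 + V x)"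
        by (simp add: S_def)
      then have "AE x in lebesgue_on \<Omega>. \<forall>n::nat. \<forall>\<eta>. G x \<eta> \<ge> (real n + 1) * ((norm \<eta>)\<^sup>2 + V x)"
        by (simp add: AE_all_countable)
      then have "AE x in lebesgue_on \<Omega>. V x \<ge> 0 \<and> (\<forall>n::nat. \<forall>\<eta>. G x \<eta> \<ge> (real n + 1) * ((norm \<eta>)\<^sup>2 + V x))"
        using assms(7) by eventually_elim auto
      then obtain x where "V x \<ge> 0 \<and> (\<forall>n::nat. \<forall>\<eta>. G x \<eta> \<ge> (real n + 1) * ((norm \<eta>)\<^sup>2 + V x))"
        using AE_ex[OF assms(1,2)] by blast
      then have x: "V x \<ge> 0" "\<And>n \<eta>. G x \<eta> \<ge> (real n + 1) * ((norm \<eta>)\<^sup>2 + V x)" by auto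
      obtain k :: 'n where True by blast
      define e :: "complex^'n" where "e = axis k 1"
      have ne: "norm e > 0" unfolding e_def by simp
      obtain n :: nat where n: "G x e / (norm e)^2 < real n" using reals_Archimedean2 by blast
      have "G x e \<ge> (real n + 1) * ((norm e)\<^sup>2 + V x)" by (rule x(2))
      also have "(real n + 1) * ((norm e)\<^sup>2 + V x) \<ge> (real n + 1) * (norm e)\<^sup>2"
        using x(1) by (intro mult_left_mono) auto
      finally have "G x e \<ge> (real n + 1) * (norm e)\<^sup>2" .
      moreover have "G x e < real n * (norm e)^2" using n ne by (simp add: divide_less_eq)
      moreover have "(real n + 1) * (norm e)^2 = real n * (norm e)^2 + (norm e)^2" by (simp add: algebra_simps)
      moreover have "(norm e)^2 > 0" using ne by simp
      ultimately show False by linarith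
    qed
    have "\<forall>n::nat. \<exists>\<mu>\<in>S. Sup S - 1 / (real n + 1) < \<mu>"
      using Sne by (intro allI less_cSupD) auto
    then obtain f where f: "\<And>n. f n \<in> S" "\<And>n. Sup S - 1 / (real n + 1) < f n" by metis
    have "\<forall>n::nat. AE x in lebesgue_on \<Omega>. \<forall>\<eta>. G x \<eta> \<ge> f n * ((norm \<eta>)\<^sup>2 + V x)"
      using f(1) by (simp add: S_def)
    then have "AE x in lebesgue_on \<Omega>. \<forall>n::nat. \<forall>\<eta>. G x \<eta> \<ge> f n * ((norm \<eta>)\<^sup>2 + V x)"
      by (simp add: AE_all_countable)
    then have AEm: "AE x in lebesgue_on \<Omega>. \<forall>\<eta>. G x \<eta> \<ge> Sup S * ((norm \<eta>)\<^sup>2 + V x)"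
      using assms(7)
    proof eventually_elim
      case (elim x)
      show ?case
      proof (intro allI)
        fix \<eta> :: "complex^'n"
        define q where "q = (norm \<eta>)\<^sup>2 + V x"
        have q0: "q \<ge> 0" using elim(2) by (simp add: q_def)
        show "G x \<eta> \<ge> Sup S * ((norm \<eta>)\<^sup>2 + V x)"
        proof (rule ccontr)
          assume "\<not> ?thesis"
          then have lt: "G x \<eta> < Sup S * q" by (simp add: q_def)
          have "G x \<eta> \<ge> f 0 * q" using elim(1) by (simp add: q_def)
          then have qp: "q > 0" using lt q0 by (cases "q = 0") auto
          define d where "d = (Sup S * q - G x \<eta>) / q"
          have dp: "d > 0" using lt qp by (simp add: d_def)
          obtain n where n: "inverse (real (Suc n)) < d" using reals_Archimedean[OF dp] by blast
          have "Sup S - d < f n" using f(2)[of n] n by (simp add: inverse_eq_divide add.commute)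
          then have "(Sup S - d) * q < f n * q" using qp by simp
          also have "\<dots> \<le> G x \<eta>" using elim(1) by (simp add: q_def)
          finally have lt2: "(Sup S - d) * q < G x \<eta>" .
          have dq: "d * q = Sup S * q - G x \<eta>" using qp by (simp add: d_def)
          have "(Sup S - d) * q = G x \<eta>" using dq by (simp add: algebra_simps)
          then show False using lt2 by simp
        qed
      qed
    qed
    show ?thesis using AEm
    proof eventually_elim
      case (elim x)
      have le: "Sup S * ((norm \<xi>)\<^sup>2 + V x) \<le> Gamma_r r (A x) (b x) (c x) (V x) \<xi>"
        using elim unfolding G_def by blast
      have "r * mu_r \<Omega> r A b c V * cmod \<zeta> powr (r - 2) * ((norm X)\<^sup>2 + V x * (cmod \<zeta>)\<^sup>2)
          = r * P * N * (Sup S * ((norm \<xi>)\<^sup>2 + V x))"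
        unfolding Pc normX m N_def[symmetric] by (simp only: algebra_simps)
      also have "\<dots> \<le> r * P * N * Gamma_r r (A x) (b x) (c x) (V x) \<xi>"
        using le rPN by (intro mult_left_mono) auto
      also have "\<dots> = Hphi (F_r r) (A x) (b x) (c x) (V x) \<zeta> X"
        by (rule H[symmetric])
      finally show ?case .
    qed
  qed
  show ?thesis using part1 part2 by (intro conjI impI)
qed


end
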